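(* Let $G$ be a finite simple graph without isolated vertices and let $f=(V_0,V_1,V_2)$ be a $\gamma_{tR}(G)$-function. Then $\gamma_{tR}(G)\ge |V(G)|-(\Delta(G)-2)|V_2|$ and $|V_2|\ge \frac{|V(G)|-|V_1|}{\Delta(G)}$. Moreover, if in addition $|V(G)|=\Delta(G)|V_2|+|V_1|$, then $\gamma_{tR}(G)=|V(G)|-(\Delta(G)-2)|V_2|$.
   Context: $\Delta(G)$ denotes the maximum degree of $G$. A total Roman dominating function on $G$ is a map $f:V(G)\to\{0,1,2\}$, written $f=(V_0,V_1,V_2)$ with $V_i=\{v:f(v)=i\}$, such that every vertex of $V_0$ has a neighbor in $V_2$ and the subgraph induced by $V_1\cup V_2$ has no isolated vertices; $\gamma_{tR}(G)$ is the minimum of $\sum_v f(v)$ over such $f$, and a $\gamma_{tR}(G)$-function is one attaining this minimum. *)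

theory Defs
  imports Complex_Main
begin

definition simple_graph :: "'a set \<Rightarrow> ('a \<Rightarrow> 'a \<Rightarrow> bool) \<Rightarrow> bool" where
  "simple_graph V E \<longleftrightarrow> finite V \<and> (\<forall>u v. E u v \<longrightarrow> u \<in> V \<and> v \<in> V)
     \<and> (\<forall>u v. E u v \<longrightarrow> E v u) \<and> (\<forall>v. \<not> E v v)"

definition nbhd :: "'a set \<Rightarrow> ('a \<Rightarrow> 'a \<Rightarrow> bool) \<Rightarrow> 'a \<Rightarrow> 'a set" where
  "nbhd V E v = {u \<in> V. E v u}"

definition degree :: "'a set \<Rightarrow> ('a \<Rightarrow> 'a \<Rightarrow> bool) \<Rightarrow> 'a \<Rightarrow> nat" where
  "degree V E v = card (nbhd V E v)"

definition max_degree :: "'a set \<Rightarrow> ('a \<Rightarrow> 'a \<Rightarrow> bool) \<Rightarrow> nat" where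
  "max_degree V E = Max (degree V E ` V)"

definition no_isolated :: "'a set \<Rightarrow> ('a \<Rightarrow> 'a \<Rightarrow> bool) \<Rightarrow> bool" where
  "no_isolated V E \<longleftrightarrow> (\<forall>v\<in>V. \<exists>u\<in>V. E v u)"

definition level :: "'a set \<Rightarrow> ('a \<Rightarrow> nat) \<Rightarrow> nat \<Rightarrow> 'a set" where
  "level V f i = {v \<in> V. f v = i}"

text \<open>Total Roman dominating function (values in {0,1,2} on V; f is only
considered on V, and we require f = 0 outside V for a canonical choice).\<close>
definition is_trdf :: "'a set \<Rightarrow> ('a \<Rightarrow> 'a \<Rightarrow> bool) \<Rightarrow> ('a \<Rightarrow> nat) \<Rightarrow> bool" where
  "is_trdf V E f \<longleftrightarrow>
     (\<forall>v\<in>V. f v \<le> 2) \<and> (\<forall>v. v \<notin> V \<longrightarrow> f v = 0)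
     \<and> (\<forall>v\<in>V. f v = 0 \<longrightarrow> (\<exists>u\<in>V. E v u \<and> f u = 2))
     \<and> (\<forall>v\<in>V. f v \<ge> 1 \<longrightarrow> (\<exists>u\<in>V. E v u \<and> f u \<ge> 1))"

definition weight :: "'a set \<Rightarrow> ('a \<Rightarrow> nat) \<Rightarrow> nat" where
  "weight V f = (\<Sum>v\<in>V. f v)"

definition gamma_tR :: "'a set \<Rightarrow> ('a \<Rightarrow> 'a \<Rightarrow> bool) \<Rightarrow> nat" where
  "gamma_tR V E = (LEAST w. \<exists>f. is_trdf V E f \<and> weight V f = w)"

definition is_gamma_tR_function :: "'a set \<Rightarrow> ('a \<Rightarrow> 'a \<Rightarrow> bool) \<Rightarrow> ('a \<Rightarrow> nat) \<Rightarrow> bool" where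
  "is_gamma_tR_function V E f \<longleftrightarrow> is_trdf V E f \<and> weight V f = gamma_tR V E"

end

theory Submission
  imports Defs
begin

lemma weight_levels:
  assumes fin: "finite V" and b: "\<forall>v\<in>V. f v \<le> 2"
  shows "weight V f = card (level V f 1) + 2 * card (level V f 2)"
proof -
  have V: "V = level V f 0 \<union> (level V f 1 \<union> level V f 2)"
    using b unfolding level_def by force
  have "weight V f = sum f (level V f 0) + (sum f (level V f 1) + sum f (level V f 2))"
    unfolding weight_def
    apply (subst V)
    apply (subst sum.union_disjoint, use fin in \<open>auto simp: level_def\<close>)
    apply (subst sum.union_disjoint, use fin in \<open>auto simp: level_def\<close>)
    done
  also have "sum f (level V f 0) = 0" by (simp add: level_def)
  also have "sum f (level V f 1) = card (level V f 1)" by (simp add: level_def)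
  also have "sum f (level V f 2) = 2 * card (level V f 2)" by (simp add: level_def)
  finally show ?thesis by simp
qed

lemma key_bound:
  assumes g: "simple_graph V E" and t: "is_trdf V E f"
  shows "card (level V f 0) \<le> card (level V f 2) * (max_degree V E - 1)"
proof -
  have fin: "finite V" using g by (simp add: simple_graph_def)
  have sub: "level V f 0 \<subseteq> (\<Union>u\<in>level V f 2. nbhd V E u \<inter> level V f 0)"
  proof
    fix v assume v: "v \<in> level V f 0"
    then obtain u where u: "u \<in> V" "E v u" "f u = 2" using t unfolding is_trdf_def level_def by blast
    have "E u v" using g u unfolding simple_graph_def by blast
    then show "v \<in> (\<Union>u\<in>level V f 2. nbhd V E u \<inter> level V f 0)"
      using u v by (auto simp: nbhd_def level_def)
  qed
  have each: "card (nbhd V E u \<inter> level V f 0) \<le> max_degree V E - 1" if u: "u \<in> level V f 2" for u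
  proof -
    obtain w where w: "w \<in> V" "E u w" "f w \<ge> 1" using t u unfolding is_trdf_def level_def by force
    have wn: "w \<in> nbhd V E u" using w by (simp add: nbhd_def)
    have "nbhd V E u \<inter> level V f 0 \<subseteq> nbhd V E u - {w}" using w by (auto simp: level_def)
    moreover have fn: "finite (nbhd V E u)" using fin by (simp add: nbhd_def)
    ultimately have "card (nbhd V E u \<inter> level V f 0) \<le> card (nbhd V E u - {w})"
      by (intro card_mono) auto
    also have "\<dots> = degree V E u - 1" using wn fn by (simp add: degree_def)
    also have "degree V E u \<le> max_degree V E" unfolding max_degree_def
      using fin u by (intro Max_ge) (auto simp: level_def)
    hence "degree V E u - 1 \<le> max_degree V E - 1" by simp
    finally show ?thesis .
  qed
  have "card (level V f 0) \<le> card (\<Union>u\<in>level V f 2. nbhd V E u \<inter> level V f 0)"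
    using sub fin by (intro card_mono) (auto simp: level_def)
  also have "\<dots> \<le> (\<Sum>u\<in>level V f 2. card (nbhd V E u \<inter> level V f 0))"
    by (rule card_UN_le) (use fin in \<open>simp add: level_def\<close>)
  also have "\<dots> \<le> (\<Sum>u\<in>level V f 2. max_degree V E - 1)"
    by (rule sum_mono) (rule each)
  finally show ?thesis by simp
qed

lemma deg_pos:
  assumes g: "simple_graph V E" and t: "is_trdf V E f" and u: "u \<in> level V f 2"
  shows "max_degree V E \<ge> 1"
proof -
  have fin: "finite V" using g by (simp add: simple_graph_def)
  obtain w where w: "w \<in> V" "E u w" "f w \<ge> 1" using t u unfolding is_trdf_def level_def by force
  have wn: "w \<in> nbhd V E u" using w by (simp add: nbhd_def)
  have fn: "finite (nbhd V E u)" using fin by (simp add: nbhd_def)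
  have "nbhd V E u \<noteq> {}" using wn by blast
  hence "card (nbhd V E u) > 0" using fn by (simp add: card_gt_0_iff)
  hence "1 \<le> degree V E u" unfolding degree_def by simp
  also have "degree V E u \<le> max_degree V E" unfolding max_degree_def
    using fin u by (intro Max_ge) (auto simp: level_def)
  finally show ?thesis .
qed

theorem theorem4p1:
  fixes V :: "'a set" and E :: "'a \<Rightarrow> 'a \<Rightarrow> bool" and f :: "'a \<Rightarrow> nat"
  assumes "simple_graph V E"
    and "no_isolated V E"
    and "is_gamma_tR_function V E f"
  shows "int (gamma_tR V E) \<ge> int (card V) - (int (max_degree V E) - 2) * int (card (level V f 2))
    \<and> real (card (level V f 2)) \<ge> (real (card V) - real (card (level V f 1))) / real (max_degree V E)
    \<and> (card V = max_degree V E * card (level V f 2) + card (level V f 1) \<longrightarrow>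
         int (gamma_tR V E) = int (card V) - (int (max_degree V E) - 2) * int (card (level V f 2)))"
proof -
  have fin: "finite V" using assms(1) by (simp add: simple_graph_def)
  have t: "is_trdf V E f" and gw: "gamma_tR V E = weight V f"
    using assms(3) by (auto simp: is_gamma_tR_function_def)
  have b: "\<forall>v\<in>V. f v \<le> 2" using t by (simp add: is_trdf_def)
  define a where "a = card (level V f 0)"
  define b1 where "b1 = card (level V f 1)"
  define c where "c = card (level V f 2)"
  define D where "D = max_degree V E"
  have w: "gamma_tR V E = b1 + 2 * c" using gw weight_levels[OF fin b] by (simp add: b1_def c_def)
  have kb: "a \<le> c * (D - 1)" using key_bound[OF assms(1) t] by (simp add: a_def c_def D_def)
  have V: "V = level V f 0 \<union> (level V f 1 \<union> level V f 2)"
    using b unfolding level_def by force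
  have n: "card V = a + b1 + c"
    unfolding a_def b1_def c_def
    apply (subst V)
    apply (subst card_Un_disjoint, use fin in \<open>auto simp: level_def\<close>)
    apply (subst card_Un_disjoint, use fin in \<open>auto simp: level_def\<close>)
    done
  have ki: "int a + int c \<le> int c * int D"
  proof (cases "D = 0")
    case True
    have "c = 0"
    proof (rule ccontr)
      assume "c \<noteq> 0"
      hence "level V f 2 \<noteq> {}" unfolding c_def by (metis card.empty)
      then obtain u where "u \<in> level V f 2" by blast
      from deg_pos[OF assms(1) t this] have "1 \<le> D" unfolding D_def .
      with True show False by linarith
    qed
    then show ?thesis using kb by simp
  next
    case False
    hence "int (c * (D - 1)) = int c * int D - int c" by (simp add: of_nat_diff algebra_simps)
    then show ?thesis using kb by linarith
  qed
  have p1: "int (gamma_tR V E) \<ge> int (card V) - (int D - 2) * int c"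
    using ki w n by (simp add: algebra_simps)
  have p2: "real c \<ge> (real (card V) - real b1) / real D"
  proof (cases "D = 0")
    case True then show ?thesis by simp
  next
    case False
    have "int (a + c) \<le> int (c * D)" using ki by simp
    hence "a + c \<le> c * D" by (simp only: of_nat_le_iff)
    hence "real (a + c) \<le> real (c * D)" by (simp only: of_nat_le_iff)
    hence le: "real a + real c \<le> real c * real D" by (simp only: of_nat_add of_nat_mult)
    have eq: "real (card V) - real b1 = real a + real c" using n by simp
    have Dp: "real D > 0" using False by simp
    show ?thesis unfolding eq using le Dp by (simp add: pos_divide_le_eq)
  qed
  have p3: "card V = D * c + b1 \<longrightarrow> int (gamma_tR V E) = int (card V) - (int D - 2) * int c"
  proof
    assume h: "card V = D * c + b1"
    have "int (card V) = int D * int c + int b1" using h by simp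
    moreover have "int (gamma_tR V E) = int b1 + 2 * int c" using w by simp
    ultimately show "int (gamma_tR V E) = int (card V) - (int D - 2) * int c"
      by (simp add: right_diff_distrib left_diff_distrib)
  qed
  show ?thesis using p1 p2 p3 unfolding D_def c_def b1_def by blast
qed

end
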